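(* Let $H_3(\mathbb{Z})=\langle x,y,z\mid [x,y]=z,\ z\text{ central}\rangle$ be the $3$-dimensional integral Heisenberg group and let $p$ be a prime. If $\pi:H_3(\mathbb{Z})\to Q$ is a surjective homomorphism onto a finite $q$-group $Q$, where $q$ is a prime distinct from $p$, then $\pi(x^p)$ and $\pi(x^pz^m)$ are conjugate in $Q$ for every natural number $m$.
   Context: $[a,b]=aba^{-1}b^{-1}$. *)

theory Defs
  imports "HOL-Algebra.Algebra"
begin

text \<open>The integral Heisenberg group H_3(Z), realised as the group of upper unitriangular
  3x3 integer matrices [[1,a,c],[0,1,b],[0,0,1]], encoded as triples (a,b,c).\<close>

definition heis :: "(int \<times> int \<times> int) monoid" where
  "heis = \<lparr> carrier = UNIV,
            monoid.mult = (\<lambda>(a,b,c) (a',b',c'). (a + a', b + b', c + c' + a * b')),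
            monoid.one = (0, 0, 0) \<rparr>"

definition heis_x :: "int \<times> int \<times> int" where "heis_x = (1, 0, 0)"
definition heis_y :: "int \<times> int \<times> int" where "heis_y = (0, 1, 0)"
definition heis_z :: "int \<times> int \<times> int" where "heis_z = (0, 0, 1)"

definition commutator :: "('a, 'm) monoid_scheme \<Rightarrow> 'a \<Rightarrow> 'a \<Rightarrow> 'a" where
  "commutator G a b = a \<otimes>\<^bsub>G\<^esub> b \<otimes>\<^bsub>G\<^esub> inv\<^bsub>G\<^esub> a \<otimes>\<^bsub>G\<^esub> inv\<^bsub>G\<^esub> b"

lemma heis_group: "group heis"
proof -
  have "\<And>a aa b::int. \<exists>ab. a + ab = 0 \<and> (\<exists>ac. aa + ac = 0 \<and> (\<exists>ba. b + (ba + aa * ab) = 0 \<and>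
          a + ab = 0 \<and> aa + ac = 0 \<and> b + (ba + a * ac) = 0))"
    by (rule_tac x="-a" in exI, simp, rule_tac x="-aa" in exI, simp,
        rule_tac x="-b + aa*a" in exI, simp add: algebra_simps)
  then show ?thesis
    unfolding heis_def
    by (unfold_locales) (auto simp: Units_def algebra_simps)
qed


lemma heis_commutator_xy: "commutator heis heis_x heis_y = heis_z"
proof -
  interpret group heis by (rule heis_group)
  have "inv\<^bsub>heis\<^esub> heis_x = (-1,0,0)"
    by (rule inv_equality) (auto simp: heis_def heis_x_def)
  moreover have "inv\<^bsub>heis\<^esub> heis_y = (0,-1,0)"
    by (rule inv_equality) (auto simp: heis_def heis_y_def)
  ultimately show ?thesis
    by (simp add: commutator_def heis_def heis_x_def heis_y_def heis_z_def)
qed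

lemma heis_z_central: "heis_z \<otimes>\<^bsub>heis\<^esub> g = g \<otimes>\<^bsub>heis\<^esub> heis_z"
  by (auto simp: heis_def heis_z_def split: prod.splits)

end

theory Submission
  imports Defs
begin

lemma heis_pow_x: "(a::int,0::int,0::int) [^]\<^bsub>heis\<^esub> (n::nat) = (int n * a, 0, 0)"
  by (induction n) (auto simp: heis_def algebra_simps)

lemma heis_pow_z: "(0::int,0::int,c::int) [^]\<^bsub>heis\<^esub> (n::nat) = (0, 0, int n * c)"
  by (induction n) (auto simp: heis_def algebra_simps)

theorem mainTheorem18:
  fixes Q :: "('b, 'c) monoid_scheme" and \<pi> :: "int \<times> int \<times> int \<Rightarrow> 'b"
    and p q :: nat
  assumes "Factorial_Ring.prime p" and "Factorial_Ring.prime q" and "q \<noteq> p"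
    and "group Q" and "finite (carrier Q)" and "\<exists>k::nat. order Q = q ^ k"
    and "\<pi> \<in> hom heis Q" and "\<pi> ` carrier heis = carrier Q"
  shows "\<forall>m::nat. \<exists>g \<in> carrier Q.
           \<pi> (heis_x [^]\<^bsub>heis\<^esub> p \<otimes>\<^bsub>heis\<^esub> heis_z [^]\<^bsub>heis\<^esub> m)
             = g \<otimes>\<^bsub>Q\<^esub> \<pi> (heis_x [^]\<^bsub>heis\<^esub> p) \<otimes>\<^bsub>Q\<^esub> inv\<^bsub>Q\<^esub> g"
proof
  fix m :: nat
  interpret H: group heis by (rule heis_group)
  interpret Qg: group Q by (rule assms(4))
  interpret gh: group_hom heis Q \<pi>
    using assms(4,7) heis_group by (simp add: group_hom_def group_hom_axioms_def)
  obtain k where k: "order Q = q ^ k" using assms(6) by blast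
  have carH: "carrier heis = UNIV" by (simp add: heis_def)
  define N where "N = order Q"
  have cop: "coprime (int p) (int N)"
  proof -
    have "coprime p q" using assms(1,2,3) by (simp add: primes_coprime)
    hence "coprime p (q^k)" by simp
    thus ?thesis unfolding N_def k by simp
  qed
  obtain u v where uv: "u * int p + v * int N = 1"
    using bezout_int[of "int p" "int N"] cop by auto  
  define b where "b = - int m * u"
  define s where "s = int m * v"
  have uv2: "1 - u * int p = v * int N" using uv by linarith
  have key: "int m + int p * b = int N * s"
  proof -
    have "int m + int p * b = int m * (1 - u * int p)" by (simp add: b_def algebra_simps)
    also have "... = int N * s" unfolding uv2 s_def by (simp add: algebra_simps)
    finally show ?thesis .
  qed
  define g' where "g' = (0::int, b, 0::int)"
  have invg: "inv\<^bsub>heis\<^esub> g' = (0,-b,0)"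
    unfolding g'_def by (rule H.inv_equality) (auto simp: heis_def)
  have xp: "heis_x [^]\<^bsub>heis\<^esub> p = (int p, 0, 0)"
    using heis_pow_x[of 1 p] by (simp add: heis_x_def)
  have zm: "heis_z [^]\<^bsub>heis\<^esub> m = (0, 0, int m)"
    using heis_pow_z[of 1 m] by (simp add: heis_z_def)
  define w where "w = (0::int,0::int,s)"
  have conj: "heis_x [^]\<^bsub>heis\<^esub> p \<otimes>\<^bsub>heis\<^esub> heis_z [^]\<^bsub>heis\<^esub> m
      = (g' \<otimes>\<^bsub>heis\<^esub> heis_x [^]\<^bsub>heis\<^esub> p \<otimes>\<^bsub>heis\<^esub> inv\<^bsub>heis\<^esub> g') \<otimes>\<^bsub>heis\<^esub> (w [^]\<^bsub>heis\<^esub> N)"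
    unfolding xp zm invg w_def heis_pow_z using key
    by (simp add: heis_def g'_def algebra_simps)
  have w1: "\<pi> w [^]\<^bsub>Q\<^esub> N = \<one>\<^bsub>Q\<^esub>"
    unfolding N_def using assms(5) by (intro Qg.pow_order_eq_1) (auto simp: heis_def)
  have "\<pi> (heis_x [^]\<^bsub>heis\<^esub> p \<otimes>\<^bsub>heis\<^esub> heis_z [^]\<^bsub>heis\<^esub> m)
      = \<pi> g' \<otimes>\<^bsub>Q\<^esub> \<pi> (heis_x [^]\<^bsub>heis\<^esub> p) \<otimes>\<^bsub>Q\<^esub> inv\<^bsub>Q\<^esub> \<pi> g'"
    unfolding conj using w1 by (simp add: carH gh.hom_mult gh.hom_nat_pow gh.hom_inv)
  moreover have "\<pi> g' \<in> carrier Q" by (simp add: heis_def)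
  ultimately show "\<exists>g \<in> carrier Q.
           \<pi> (heis_x [^]\<^bsub>heis\<^esub> p \<otimes>\<^bsub>heis\<^esub> heis_z [^]\<^bsub>heis\<^esub> m)
             = g \<otimes>\<^bsub>Q\<^esub> \<pi> (heis_x [^]\<^bsub>heis\<^esub> p) \<otimes>\<^bsub>Q\<^esub> inv\<^bsub>Q\<^esub> g" by blast
qed

end
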